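(* Let $\rho,\sigma$ be $n$-qubit pure states and let $\epsilon>0$, $\delta>0$. Let $\tilde p_{\mathrm{mix}}$ be a distribution with $\|p_{\mathrm{mix}}-\tilde p_{\mathrm{mix}}\|_{\mathrm{TV}}<\Delta$, and let $M_1=\max(M_1(\rho),M_1(\sigma))$. Let $f=\frac12(1+\mathrm{tr}(\rho\sigma))$ and let $f(N_1,N_2)$ be the symmetric-protocol estimator. Then $|f(N_1,N_2)-f|\le 5\epsilon+2\Delta$ with probability at least $1-\delta$, provided that $$N_1\ge\frac{1}{2\epsilon^2}\log(8/\delta),\qquad N_2\ge\frac{2}{\min(\epsilon^4,\epsilon^2 2^{-2M_1/\epsilon})}\log(8N_1/\delta).$$
   Context: $\log$ is base 2. Pauli strings $P_x$, $x\in\{0,1\}^{2n}$, are the $n$-qubit Hermitian Pauli strings; $\alpha_\rho(x)=\mathrm{tr}(\rho P_x)$; $p_\rho(x)=\alpha_\rho(x)^2/2^n$ for pure $\rho$; $p_{\mathrm{mix}}=\frac12(p_\rho+p_\sigma)$. $M_1(\rho)=H_1(p_\rho)-n$ where $H_1$ is the Shannon entropy (base 2). Symmetric protocol: draw $x_1,\dots,x_{N_1}$ i.i.d. from $\tilde p_{\mathrm{mix}}$; for each $i$, measure $P_{x_i}$ $N_2$ times on copies of $\rho$ and $N_2$ times on copies of $\sigma$, obtaining empirical means $\hat\alpha_\rho(x_i),\hat\alpha_\sigma(x_i)$ of the $\pm1$ outcomes; output $f(N_1,N_2)=\frac{1}{N_1}\sum_iG(\hat\alpha_\rho(x_i),\hat\alpha_\sigma(x_i))$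 with $G(u,v)=\frac12\frac{(u+v)^2}{u^2+v^2}$ (and $G(0,0)$ an arbitrary fixed value in $[0,1]$). *)

theory Defs
  imports "Jordan_Normal_Form.Matrix" "HOL-Probability.Probability"
begin

definition mtrace :: "complex mat \<Rightarrow> complex" where
  "mtrace A = (\<Sum>i<dim_row A. A $$ (i, i))"

definition pure_state :: "nat \<Rightarrow> complex mat \<Rightarrow> bool" where
  "pure_state n \<rho> \<longleftrightarrow> (\<exists>\<psi> :: nat \<Rightarrow> complex.
      (\<Sum>i<2 ^ n. (cmod (\<psi> i))\<^sup>2) = 1 \<and>
      \<rho> = Matrix.mat (2 ^ n) (2 ^ n) (\<lambda>(i, j). \<psi> i * cnj (\<psi> j)))"

definition pauli_strings :: "nat \<Rightarrow> bool list set" where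
  "pauli_strings n = {x. length x = 2 * n}"

text \<open>Single-qubit Hermitian Pauli i^(ab) X^a Z^b, entry (r,c):
  (0,0) = I, (1,0) = X, (0,1) = Z, (1,1) = Y.\<close>
definition pauli1 :: "bool \<Rightarrow> bool \<Rightarrow> bool \<Rightarrow> bool \<Rightarrow> complex" where
  "pauli1 a b r c =
     (if \<not> a \<and> \<not> b then (if r = c then 1 else 0)
      else if a \<and> \<not> b then (if r \<noteq> c then 1 else 0)
      else if \<not> a \<and> b then (if r = c then (if r then -1 else 1) else 0)
      else (if r = c then 0 else if r then \<i> else - \<i>))"

text \<open>n-qubit Pauli string P_x for x = (a_1..a_n, b_1..b_n), the tensor product of
  single-qubit Paulis; qubit k corresponds to bit k of the basis index.\<close>
definition pauli :: "nat \<Rightarrow> bool list \<Rightarrow> complex mat" where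
  "pauli n x = Matrix.mat (2 ^ n) (2 ^ n)
     (\<lambda>(r, c). \<Prod>k<n. pauli1 (x ! k) (x ! (n + k)) (odd (r div 2 ^ k)) (odd (c div 2 ^ k)))"

definition alpha :: "nat \<Rightarrow> complex mat \<Rightarrow> bool list \<Rightarrow> real" where
  "alpha n \<rho> x = Re (mtrace (\<rho> * pauli n x))"

definition p_state :: "nat \<Rightarrow> complex mat \<Rightarrow> bool list \<Rightarrow> real" where
  "p_state n \<rho> x = (alpha n \<rho> x)\<^sup>2 / 2 ^ n"

definition p_mix :: "nat \<Rightarrow> complex mat \<Rightarrow> complex mat \<Rightarrow> bool list \<Rightarrow> real" where
  "p_mix n \<rho> \<sigma> x = (p_state n \<rho> x + p_state n \<sigma> x) / 2"

definition shannon :: "'a set \<Rightarrow> ('a \<Rightarrow> real) \<Rightarrow> real" where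
  "shannon X p = - (\<Sum>x\<in>X. if p x = 0 then 0 else p x * log 2 (p x))"

definition stabilizer_renyi1 :: "nat \<Rightarrow> complex mat \<Rightarrow> real" where
  "stabilizer_renyi1 n \<rho> = shannon (pauli_strings n) (p_state n \<rho>) - real n"

definition tv_dist :: "'a set \<Rightarrow> ('a \<Rightarrow> real) \<Rightarrow> ('a \<Rightarrow> real) \<Rightarrow> real" where
  "tv_dist X p q = (\<Sum>x\<in>X. \<bar>p x - q x\<bar>) / 2"

definition G :: "real \<Rightarrow> real \<Rightarrow> real \<Rightarrow> real" where
  "G g0 u v = (if u = 0 \<and> v = 0 then g0 else (u + v)\<^sup>2 / (2 * (u\<^sup>2 + v\<^sup>2)))"

fun seq_pmf :: "'a pmf list \<Rightarrow> 'a list pmf" where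
  "seq_pmf [] = return_pmf []"
| "seq_pmf (p # ps) = bind_pmf p (\<lambda>x. bind_pmf (seq_pmf ps) (\<lambda>xs. return_pmf (x # xs)))"

definition iid_pmf :: "nat \<Rightarrow> 'a pmf \<Rightarrow> 'a list pmf" where
  "iid_pmf N p = seq_pmf (replicate N p)"

definition measure_pauli :: "nat \<Rightarrow> complex mat \<Rightarrow> bool list \<Rightarrow> real pmf" where
  "measure_pauli n \<rho> x =
     map_pmf (\<lambda>b. if b then 1 else -1) (bernoulli_pmf ((1 + alpha n \<rho> x) / 2))"

definition emp_mean :: "real list \<Rightarrow> real" where
  "emp_mean xs = sum_list xs / real (length xs)"

definition protocol_round ::
  "nat \<Rightarrow> complex mat \<Rightarrow> complex mat \<Rightarrow> real \<Rightarrow> nat \<Rightarrow> bool list \<Rightarrow> real pmf" where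
  "protocol_round n \<rho> \<sigma> g0 N2 x =
     bind_pmf (iid_pmf N2 (measure_pauli n \<rho> x)) (\<lambda>as.
     bind_pmf (iid_pmf N2 (measure_pauli n \<sigma> x)) (\<lambda>bs.
     return_pmf (G g0 (emp_mean as) (emp_mean bs))))"

definition symmetric_estimator ::
  "nat \<Rightarrow> complex mat \<Rightarrow> complex mat \<Rightarrow> real \<Rightarrow> bool list pmf \<Rightarrow> nat \<Rightarrow> nat \<Rightarrow> real pmf" where
  "symmetric_estimator n \<rho> \<sigma> g0 pt N1 N2 =
     bind_pmf (iid_pmf N1 pt) (\<lambda>xs.
     bind_pmf (seq_pmf (map (protocol_round n \<rho> \<sigma> g0 N2) xs)) (\<lambda>gs.
     return_pmf (sum_list gs / real N1)))"

end

theory Submission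
  imports Defs
begin
lemma seq_pmf_append:
  "seq_pmf (xs @ ys) = map_pmf (\<lambda>(a,b). a @ b) (pair_pmf (seq_pmf xs) (seq_pmf ys))"
proof (induction xs)
  case Nil
  then show ?case by (simp add: pair_return_pmf1 pmf.map_comp o_def)
next
  case (Cons p xs)
  show ?case
    by (simp add: Cons map_pmf_def pair_pmf_def bind_assoc_pmf bind_return_pmf)
qed

lemma seq_pmf_Pi:
  "seq_pmf ps = map_pmf (\<lambda>f. map f [0..<length ps]) (Pi_pmf {..<length ps} dflt (\<lambda>i. ps ! i))"
proof (induction ps rule: rev_induct)
  case Nil
  then show ?case by simp
next
  case (snoc p ps)
  define N where "N = length ps"
  have "Pi_pmf {..<length (ps @ [p])} dflt (\<lambda>i. (ps @ [p]) ! i)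
      = Pi_pmf (insert N {..<N}) dflt (\<lambda>i. (ps @ [p]) ! i)"
    by (simp add: N_def lessThan_Suc)
  also have "\<dots> = map_pmf (\<lambda>(y,f). f(N:=y)) (pair_pmf p (Pi_pmf {..<N} dflt (\<lambda>i. (ps @ [p]) ! i)))"
    by (subst Pi_pmf_insert) (auto simp: N_def)
  also have "Pi_pmf {..<N} dflt (\<lambda>i. (ps @ [p]) ! i) = Pi_pmf {..<N} dflt (\<lambda>i. ps ! i)"
    by (intro Pi_pmf_cong) (auto simp: N_def nth_append)
  finally have eq: "Pi_pmf {..<length (ps @ [p])} dflt (\<lambda>i. (ps @ [p]) ! i) =
     map_pmf (\<lambda>(y,f). f(N:=y)) (pair_pmf p (Pi_pmf {..<N} dflt (\<lambda>i. ps ! i)))" .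
  have m: "map (f(N:=y)) [0..<Suc N] = map f [0..<N] @ [y]" for f and y :: 'a
    by simp
  show ?case
    apply (subst eq)
    apply (simp add: seq_pmf_append snoc N_def[symmetric] pmf.map_comp o_def)
    apply (subst pair_commute_pmf)
    apply (simp add: pmf.map_comp o_def case_prod_beta m map_pmf_def pair_pmf_def bind_assoc_pmf bind_return_pmf)
    done
qed

lemma iid_Pi: "iid_pmf N D = map_pmf (\<lambda>f. map f [0..<N]) (Pi_pmf {..<N} dflt (\<lambda>_. D))"
  unfolding iid_pmf_def
  by (subst seq_pmf_Pi[where dflt=dflt]) (simp, intro arg_cong[where f="map_pmf _"] Pi_pmf_cong, auto)

lemma hoeffding_iid:
  fixes D :: "real pmf"
  assumes sub: "set_pmf D \<subseteq> {a..b}" and ab: "a < b" and N: "N > 0" and t: "t \<ge> 0"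
  shows "measure_pmf.prob (iid_pmf N D)
           {xs. \<bar>sum_list xs / real N - measure_pmf.expectation D (\<lambda>x. x)\<bar> \<ge> t}
         \<le> 2 * exp (- 2 * real N * t\<^sup>2 / (b - a)\<^sup>2)"
proof -
  define M where "M = Pi_pmf {..<N} 0 (\<lambda>_. D)"
  have comp: "map_pmf (\<lambda>f. f i) M = D" if "i < N" for i
    using that unfolding M_def by (subst Pi_pmf_component) auto
  interpret H: Hoeffding_ineq_iid M "{..<N}" "\<lambda>i f. f i" "\<lambda>f. f 0" a b
    "measure_pmf.expectation D (\<lambda>x. x)"
  proof unfold_locales
    show "prob_space.indep_vars (measure_pmf M) (\<lambda>_. borel) (\<lambda>i f. f i) {..<N}"
      unfolding M_def
      by (intro prob_space.indep_vars_compose2[where Y="\<lambda>_ x. x", OF _ indep_vars_Pi_pmf])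
         (auto simp: measure_pmf.prob_space_axioms)
  next
    fix i assume "i \<in> {..<N}"
    then have "i < N" by simp
    have "distr (measure_pmf M) borel (\<lambda>f. f i) =
          distr (measure_pmf (map_pmf (\<lambda>f. f i) M)) borel (\<lambda>x. x)"
      unfolding map_pmf_rep_eq by (subst distr_distr) (auto simp: o_def)
    also have "\<dots> = distr (measure_pmf (map_pmf (\<lambda>f. f 0) M)) borel (\<lambda>x. x)"
      using comp[OF \<open>i < N\<close>] comp[OF N] by simp
    also have "\<dots> = distr (measure_pmf M) borel (\<lambda>f. f 0)"
      unfolding map_pmf_rep_eq by (subst distr_distr) (auto simp: o_def)
    finally show "distr (measure_pmf M) borel (\<lambda>f. f i) = distr (measure_pmf M) borel (\<lambda>f. f 0)" .
  next
    show "AE x in measure_pmf M. x 0 \<in> {a..b}"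
    proof (subst AE_measure_pmf_iff, intro ballI)
      fix f assume "f \<in> set_pmf M"
      then have "f 0 \<in> set_pmf (map_pmf (\<lambda>f. f 0) M)" by auto
      then show "f 0 \<in> {a..b}" using comp[OF N] sub by auto
    qed
  next
    have "measure_pmf.expectation M (\<lambda>f. f 0) = measure_pmf.expectation (map_pmf (\<lambda>f. f 0) M) (\<lambda>x. x)"
      by simp
    also have "\<dots> = measure_pmf.expectation D (\<lambda>x. x)" using comp[OF N] by simp
    finally show "measure_pmf.expectation D (\<lambda>x. x) \<equiv> measure_pmf.expectation M (\<lambda>f. f 0)" by simp
  qed simp_all
  have "measure_pmf.prob (iid_pmf N D)
           {xs. \<bar>sum_list xs / real N - measure_pmf.expectation D (\<lambda>x. x)\<bar> \<ge> t}
       = measure_pmf.prob M {f. \<bar>(\<Sum>i\<in>{..<N}. f i) / real (card {..<N}) - measure_pmf.expectation D (\<lambda>x. x)\<bar> \<ge> t}"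
    unfolding iid_Pi[where dflt=0] M_def[symmetric]
    by (simp add: sum_list_sum_nth atLeast0LessThan)
  also have "\<dots> \<le> 2 * exp (- 2 * real (card {..<N}) * t\<^sup>2 / (b - a)\<^sup>2)"
  proof -
    have ne: "{..<N} \<noteq> {}" using N by auto
    show ?thesis using H.Hoeffding_ineq_abs_ge'[OF t ab ne] by simp
  qed
  finally show ?thesis by simp
qed

lemma sgn_diff_le:
  fixes a b :: "'a::real_normed_vector"
  assumes "b \<noteq> 0"
  shows "norm (sgn a - sgn b) \<le> 2 * norm (a - b) / norm b"
proof (cases "a = 0")
  case True
  then show ?thesis using assms by (simp add: norm_sgn)
next
  case False
  have nb: "norm b > 0" using assms by simp
  have na: "norm a > 0" using False by simp
  have "sgn a - sgn b = (a - b) /\<^sub>R norm b + (inverse (norm a) - inverse (norm b)) *\<^sub>R a"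
    using nb na by (simp add: sgn_div_norm algebra_simps divide_inverse_commute scaleR_diff_left)
  hence "norm (sgn a - sgn b) \<le> norm ((a - b) /\<^sub>R norm b) + norm ((inverse (norm a) - inverse (norm b)) *\<^sub>R a)"
    by (metis norm_triangle_ineq)
  also have "norm ((a - b) /\<^sub>R norm b) = norm (a - b) / norm b" using nb by (simp add: divide_inverse ac_simps)
  also have "norm ((inverse (norm a) - inverse (norm b)) *\<^sub>R a) = \<bar>norm b - norm a\<bar> / norm b"
    using na nb by (simp add: field_simps abs_mult)
  also have "\<bar>norm b - norm a\<bar> \<le> norm (a - b)"
    by (metis norm_minus_commute norm_triangle_ineq3)
  finally show ?thesis using nb by (simp add: divide_right_mono field_simps)
qed

lemma G_via_sgn:
  assumes "(u, v) \<noteq> (0, 0)"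
  shows "G g0 u v = 1/2 + Im ((sgn (Complex u v))\<^sup>2) / 2"
proof -
  have r: "u\<^sup>2 + v\<^sup>2 > 0" using assms
    by (metis prod.inject add_nonneg_eq_0_iff not_less_iff_gr_or_eq zero_le_power2 power_eq_0_iff sum_power2_gt_zero_iff)
  have "cmod (Complex u v) = sqrt (u\<^sup>2 + v\<^sup>2)" by (simp add: cmod_def)
  then have "Im ((sgn (Complex u v))\<^sup>2) = 2 * u * v / (u\<^sup>2 + v\<^sup>2)"
    using r by (simp add: sgn_div_norm power2_eq_square Complex_eq field_simps)
  then show ?thesis using assms r unfolding G_def
    by (auto simp: field_simps power2_eq_square)
qed

lemma G_close:
  fixes u v u' v' t \<epsilon> g0 :: real
  assumes r: "u\<^sup>2 + v\<^sup>2 > 0" and du: "\<bar>u' - u\<bar> < t" and dv: "\<bar>v' - v\<bar> < t"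
    and te: "t\<^sup>2 \<le> \<epsilon>\<^sup>2 * (u\<^sup>2 + v\<^sup>2)" and e: "0 < \<epsilon>" "\<epsilon> \<le> 1/5"
  shows "\<bar>G g0 u' v' - G g0 u v\<bar> \<le> 29/10 * \<epsilon>"
proof -
  define w where "w = Complex u v"
  define w' where "w' = Complex u' v'"
  have nw2: "(cmod w)\<^sup>2 = u\<^sup>2 + v\<^sup>2" unfolding w_def cmod_def using r by simp
  have nd2: "(cmod (w' - w))\<^sup>2 = (u' - u)\<^sup>2 + (v' - v)\<^sup>2" unfolding w_def w'_def cmod_def by simp
  have t0: "t > 0" using du by linarith
  have "(u' - u)\<^sup>2 < t\<^sup>2" using du t0
    by (metis abs_ge_zero abs_power2 power2_abs power_strict_mono zero_less_numeral)
  moreover have "(v' - v)\<^sup>2 < t\<^sup>2" using dv t0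
    by (metis abs_ge_zero abs_power2 power2_abs power_strict_mono zero_less_numeral)
  moreover have "2 * \<epsilon>\<^sup>2 * (cmod w)\<^sup>2 = 2 * (\<epsilon>\<^sup>2 * (u\<^sup>2 + v\<^sup>2))" unfolding nw2 by simp
  ultimately have nd: "(cmod (w' - w))\<^sup>2 < 2 * \<epsilon>\<^sup>2 * (cmod w)\<^sup>2" using nd2 te by linarith
  have wnz: "w \<noteq> 0" using r nw2 by auto
  have "\<epsilon>\<^sup>2 \<le> (1/5)\<^sup>2" using e by (intro power_mono) auto
  then have e2: "\<epsilon>\<^sup>2 \<le> 1/25" by (simp add: power_divide)
  have "w' \<noteq> 0"
  proof
    assume "w' = 0"
    then have "(cmod w)\<^sup>2 < 2 * \<epsilon>\<^sup>2 * (cmod w)\<^sup>2" using nd by simp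
    moreover have "\<epsilon>\<^sup>2 * (cmod w)\<^sup>2 \<le> 1/25 * (cmod w)\<^sup>2" by (rule mult_right_mono[OF e2]) simp
    moreover have "(cmod w)\<^sup>2 > 0" using wnz by simp
    ultimately show False by linarith
  qed
  then have w'nz: "(u', v') \<noteq> (0, 0)" unfolding w'_def by (auto simp: complex_eq_iff)
  have wnz': "(u, v) \<noteq> (0, 0)" using wnz unfolding w_def by (auto simp: complex_eq_iff)
  have "G g0 u' v' - G g0 u v = Im ((sgn w')\<^sup>2 - (sgn w)\<^sup>2) / 2"
    using G_via_sgn[OF w'nz] G_via_sgn[OF wnz'] unfolding w_def w'_def by (simp add: diff_divide_distrib)
  then have "\<bar>G g0 u' v' - G g0 u v\<bar> = \<bar>Im ((sgn w')\<^sup>2 - (sgn w)\<^sup>2)\<bar> / 2" by (simp only: abs_divide)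
  also have "\<dots> \<le> cmod ((sgn w')\<^sup>2 - (sgn w)\<^sup>2) / 2"
    by (rule divide_right_mono[OF abs_Im_le_cmod]) simp
  also have "(sgn w')\<^sup>2 - (sgn w)\<^sup>2 = (sgn w' - sgn w) * (sgn w' + sgn w)"
    by (simp add: power2_eq_square algebra_simps)
  also have "cmod \<dots> = cmod (sgn w' - sgn w) * cmod (sgn w' + sgn w)"
    by (simp add: norm_mult)
  also have "cmod (sgn w' + sgn w) \<le> 2"
    using norm_triangle_ineq[of "sgn w'" "sgn w"] by (simp add: norm_sgn \<open>w' \<noteq> 0\<close> wnz)
  hence "cmod (sgn w' - sgn w) * cmod (sgn w' + sgn w) \<le> cmod (sgn w' - sgn w) * 2"
    by (rule mult_left_mono) simp
  hence "cmod (sgn w' - sgn w) * cmod (sgn w' + sgn w) / 2 \<le> cmod (sgn w' - sgn w)"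
    by simp
  also have "cmod (sgn w' - sgn w) \<le> 2 * cmod (w' - w) / cmod w"
    by (rule sgn_diff_le[OF wnz])
  finally have A: "\<bar>G g0 u' v' - G g0 u v\<bar> \<le> 2 * cmod (w' - w) / cmod w" .
  have nwpos: "cmod w > 0" using wnz by simp
  have "(2 * cmod (w' - w) / cmod w)\<^sup>2 = 4 * (cmod (w' - w))\<^sup>2 / (cmod w)\<^sup>2"
    by (simp add: power_divide power_mult_distrib)
  also have "\<dots> \<le> 4 * (2 * \<epsilon>\<^sup>2 * (cmod w)\<^sup>2) / (cmod w)\<^sup>2"
    using nd nwpos by (intro divide_right_mono mult_left_mono) auto
  also have "\<dots> = 8 * \<epsilon>\<^sup>2" using nwpos by simp
  also have "\<dots> \<le> (29/10 * \<epsilon>)\<^sup>2" by (simp add: power_mult_distrib power_divide)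
  finally have "2 * cmod (w' - w) / cmod w \<le> 29/10 * \<epsilon>"
    by (rule power2_le_imp_le) (use e in simp)
  with A show ?thesis by linarith
qed

definition pe :: "nat \<Rightarrow> bool list \<Rightarrow> nat \<Rightarrow> nat \<Rightarrow> complex" where
  "pe n x k i = (\<Prod>q<n. pauli1 (x ! q) (x ! (n + q)) (odd (k div 2 ^ q)) (odd (i div 2 ^ q)))"

lemma pauli_index: "k < 2 ^ n \<Longrightarrow> i < 2 ^ n \<Longrightarrow> pauli n x $$ (k, i) = pe n x k i"
  by (simp add: pauli_def pe_def)

lemma pauli_dims [simp]: "dim_row (pauli n x) = 2 ^ n" "dim_col (pauli n x) = 2 ^ n"
  by (simp_all add: pauli_def)

lemma sum_even_odd:
  fixes g :: "nat \<Rightarrow> 'a::comm_monoid_add" and m :: nat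
  shows "(\<Sum>i<2 * m. g i) = (\<Sum>j<m. g (2 * j) + g (2 * j + 1))"
  by (induction m) (simp_all add: algebra_simps)

lemma sum_bits_prod:
  fixes f :: "nat \<Rightarrow> bool \<Rightarrow> 'a::comm_semiring_1"
  shows "(\<Sum>i<2 ^ n. \<Prod>q<n. f q (odd ((i::nat) div 2 ^ q))) = (\<Prod>q<n. f q False + f q True)"
proof (induction n arbitrary: f)
  case 0
  then show ?case by (simp add: lessThan_Suc)
next
  case (Suc n)
  have d0: "odd ((2 * j + b) div 2 ^ 0) \<longleftrightarrow> odd b" for j b :: nat by simp
  have dS: "(2 * j + b) div 2 ^ Suc q = j div 2 ^ q" if "b < 2" for j b q :: nat
  proof -
    have "(2 * j + b) div 2 ^ Suc q = (2 * j + b) div 2 div 2 ^ q"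
      by (simp add: div_mult2_eq mult.commute)
    also have "(2 * j + b) div 2 = j" using that by simp
    finally show ?thesis .
  qed
  have split: "(\<Prod>q<Suc n. f q (odd ((2 * j + b) div 2 ^ q))) =
        f 0 (odd b) * (\<Prod>q<n. f (Suc q) (odd (j div 2 ^ q)))" if "b < 2" for j b :: nat
    by (subst prod.lessThan_Suc_shift) (simp only: dS[OF that] power_0 div_by_1, simp)
  have "(\<Sum>i<2 ^ Suc n. \<Prod>q<Suc n. f q (odd ((i::nat) div 2 ^ q)))
      = (\<Sum>j<2 ^ n. (\<Prod>q<Suc n. f q (odd ((2 * (j::nat) + 0) div 2 ^ q))) + (\<Prod>q<Suc n. f q (odd ((2 * j + 1) div 2 ^ q))))"
    by (subst power_Suc, subst sum_even_odd) simp
  also have "\<dots> = (\<Sum>j<2 ^ n. (f 0 False + f 0 True) * (\<Prod>q<n. f (Suc q) (odd ((j::nat) div 2 ^ q))))"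
  proof (intro sum.cong refl)
    fix j :: nat
    have s0: "(\<Prod>q<Suc n. f q (odd ((2 * j + 0) div 2 ^ q))) = f 0 False * (\<Prod>q<n. f (Suc q) (odd (j div 2 ^ q)))"
      using split[of 0 j] by simp
    have s1: "(\<Prod>q<Suc n. f q (odd ((2 * j + 1) div 2 ^ q))) = f 0 True * (\<Prod>q<n. f (Suc q) (odd (j div 2 ^ q)))"
      using split[of 1 j] by simp
    show "(\<Prod>q<Suc n. f q (odd ((2 * j + 0) div 2 ^ q))) + (\<Prod>q<Suc n. f q (odd ((2 * j + 1) div 2 ^ q))) =
       (f 0 False + f 0 True) * (\<Prod>q<n. f (Suc q) (odd (j div 2 ^ q)))"
      unfolding s0 s1 by (simp add: algebra_simps)
  qed
  also have "\<dots> = (f 0 False + f 0 True) * (\<Prod>q<n. f (Suc q) False + f (Suc q) True)"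
    by (simp add: sum_distrib_left[symmetric] Suc.IH[of "\<lambda>q. f (Suc q)"])
  also have "\<dots> = (\<Prod>q<Suc n. f q False + f q True)"
    by (subst prod.lessThan_Suc_shift) (rule refl)
  finally show ?case .
qed

lemma bits_eq:
  fixes i j :: nat
  assumes "i < 2 ^ n" "j < 2 ^ n" "\<forall>q<n. odd (i div 2 ^ q) = odd (j div 2 ^ q)"
  shows "i = j"
proof -
  have "bit i q = bit j q" for q
  proof (cases "q < n")
    case True
    then show ?thesis using assms(3) by (simp add: bit_iff_odd)
  next
    case False
    then have "2 ^ n \<le> (2::nat) ^ q" by simp
    then have "i < 2 ^ q" "j < 2 ^ q" using assms(1,2) by linarith+
    then have "i div 2 ^ q = 0" "j div 2 ^ q = 0" by simp_all
    then show ?thesis by (simp add: bit_iff_odd)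
  qed
  then show ?thesis by (simp add: bit_eq_iff)
qed

lemma sum_lists_prod:
  fixes f :: "nat \<Rightarrow> 'b::finite \<Rightarrow> 'a::comm_semiring_1"
  shows "(\<Sum>zs\<in>{zs. length zs = n}. \<Prod>q<n. f q (zs ! q)) = (\<Prod>q<n. \<Sum>z\<in>UNIV. f q z)"
proof (induction n arbitrary: f)
  case 0
  then show ?case by simp
next
  case (Suc n)
  have eq: "{zs. length zs = Suc n} = (\<lambda>(z, zs). z # zs) ` (UNIV \<times> {zs. length zs = n})"
    by (auto simp: image_iff length_Suc_conv)
  have inj: "inj_on (\<lambda>(z, zs). z # zs) (UNIV \<times> {zs :: 'b list. length zs = n})"
    by (auto simp: inj_on_def)
  have fin: "finite {zs :: 'b list. length zs = n}"
    using finite_lists_length_eq[of "UNIV :: 'b set" n] by simp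
  have "(\<Sum>zs\<in>{zs. length zs = Suc n}. \<Prod>q<Suc n. f q (zs ! q))
      = (\<Sum>(z, zs)\<in>UNIV \<times> {zs. length zs = n}. \<Prod>q<Suc n. f q ((z # zs) ! q))"
    unfolding eq by (subst sum.reindex[OF inj]) (simp add: case_prod_beta)
  also have "\<dots> = (\<Sum>z\<in>UNIV. \<Sum>zs\<in>{zs. length zs = n}. f 0 z * (\<Prod>q<n. f (Suc q) (zs ! q)))"
  proof -
    have pp: "(\<Prod>q<Suc n. f q ((z # zs) ! q)) = f 0 z * (\<Prod>q<n. f (Suc q) (zs ! q))" for z zs
      by (simp only: prod.lessThan_Suc_shift nth_Cons_0 nth_Cons_Suc)
    show ?thesis by (subst sum.cartesian_product[symmetric]) (simp only: pp case_prod_beta fst_conv snd_conv)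
  qed
  also have "\<dots> = (\<Sum>z\<in>UNIV. f 0 z) * (\<Prod>q<n. \<Sum>z\<in>UNIV. f (Suc q) z)"
    by (simp add: sum_distrib_left[symmetric] sum_distrib_right Suc.IH[of "\<lambda>q. f (Suc q)"])
  also have "\<dots> = (\<Prod>q<Suc n. \<Sum>z\<in>UNIV. f q z)"
    by (subst prod.lessThan_Suc_shift) (rule refl)
  finally show ?case .
qed

lemma sum_pauli_strings:
  "(\<Sum>x\<in>pauli_strings n. F x) = (\<Sum>zs\<in>{zs. length zs = n}. F (map fst zs @ map snd zs))"
proof (rule sum.reindex_bij_witness[where i = "\<lambda>zs. map fst zs @ map snd zs"
      and j = "\<lambda>x. zip (take n x) (drop n x)"])
  fix zs :: "(bool \<times> bool) list" assume "zs \<in> {zs. length zs = n}"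
  then show "zip (take n (map fst zs @ map snd zs)) (drop n (map fst zs @ map snd zs)) = zs"
    "map fst zs @ map snd zs \<in> pauli_strings n"
    by (auto simp: pauli_strings_def zip_map_fst_snd)
next
  fix x assume "x \<in> pauli_strings n"
  then have l: "length x = 2 * n" by (simp add: pauli_strings_def)
  then show "zip (take n x) (drop n x) \<in> {zs. length zs = n}" by simp
  show "map fst (zip (take n x) (drop n x)) @ map snd (zip (take n x) (drop n x)) = x"
    using l by simp
qed (auto simp: pauli_strings_def)

lemma pauli1_sum:
  "(\<Sum>z\<in>(UNIV :: (bool \<times> bool) set). pauli1 (fst z) (snd z) r c * pauli1 (fst z) (snd z) r' c') =
     (if r = c' \<and> c = r' then 2 else 0)"
  unfolding UNIV_Times_UNIV[symmetric] sum.cartesian_product[symmetric]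
  by (cases r; cases c; cases r'; cases c') (simp_all add: UNIV_bool pauli1_def)

lemma prod_if_two:
  "(\<Prod>q<n. (if P q then 2 else 0 :: complex)) = (if \<forall>q<n. P q then 2 ^ n else 0)"
  by (induction n) (auto simp: less_Suc_eq)

lemma completeness:
  assumes "k < 2 ^ n" "i < 2 ^ n" "l < 2 ^ n" "j < 2 ^ n"
  shows "(\<Sum>x\<in>pauli_strings n. pe n x k i * pe n x l j) = (if k = j \<and> i = l then 2 ^ n else 0)"
proof -
  have "(\<Sum>x\<in>pauli_strings n. pe n x k i * pe n x l j)
     = (\<Sum>zs\<in>{zs. length zs = n}. \<Prod>q<n.
          pauli1 (fst (zs ! q)) (snd (zs ! q)) (odd (k div 2 ^ q)) (odd (i div 2 ^ q)) *
          pauli1 (fst (zs ! q)) (snd (zs ! q)) (odd (l div 2 ^ q)) (odd (j div 2 ^ q)))"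
    unfolding sum_pauli_strings pe_def prod.distrib[symmetric]
    by (intro sum.cong refl prod.cong) (auto simp: nth_append)
  also have "\<dots> = (\<Prod>q<n. \<Sum>z\<in>UNIV.
          pauli1 (fst z) (snd z) (odd (k div 2 ^ q)) (odd (i div 2 ^ q)) *
          pauli1 (fst z) (snd z) (odd (l div 2 ^ q)) (odd (j div 2 ^ q)))"
    by (rule sum_lists_prod[where f = "\<lambda>q z. pauli1 (fst z) (snd z) (odd (k div 2 ^ q)) (odd (i div 2 ^ q)) *
          pauli1 (fst z) (snd z) (odd (l div 2 ^ q)) (odd (j div 2 ^ q))"])
  also have "\<dots> = (\<Prod>q<n. if odd (k div 2 ^ q) = odd (j div 2 ^ q) \<and> odd (i div 2 ^ q) = odd (l div 2 ^ q) then 2 else 0)"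
    by (simp only: pauli1_sum)
  also have "\<dots> = (if k = j \<and> i = l then 2 ^ n else 0)"
    unfolding prod_if_two using bits_eq[of k n j] bits_eq[of i n l] assms by auto
  finally show ?thesis .
qed

lemma pe_cnj: "cnj (pe n x k i) = pe n x i k"
proof -
  have "cnj (pauli1 a b r c) = pauli1 a b c r" for a b r c
    by (cases a; cases b; cases r; cases c) (simp_all add: pauli1_def)
  then show ?thesis by (simp add: pe_def)
qed

lemma pauli1_rowsum: "cmod (pauli1 a b r False) + cmod (pauli1 a b r True) = 1"
  by (cases a; cases b; cases r) (simp_all add: pauli1_def)

lemma pauli1_colsum: "cmod (pauli1 a b False c) + cmod (pauli1 a b True c) = 1"
  by (cases a; cases b; cases c) (simp_all add: pauli1_def)

lemma pe_rowsum: "(\<Sum>i<2 ^ n. cmod (pe n x k i)) = 1"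
  unfolding pe_def prod_norm[symmetric]
  by (subst sum_bits_prod[where f = "\<lambda>q c. cmod (pauli1 (x ! q) (x ! (n + q)) (odd (k div 2 ^ q)) c)"])
     (simp add: pauli1_rowsum)

lemma pe_colsum: "(\<Sum>k<2 ^ n. cmod (pe n x k i)) = 1"
  unfolding pe_def prod_norm[symmetric]
  by (subst sum_bits_prod[where f = "\<lambda>q c. cmod (pauli1 (x ! q) (x ! (n + q)) c (odd (i div 2 ^ q)))"])
     (simp add: pauli1_colsum)

lemma trace_mult_mat:
  "mtrace (Matrix.mat N N f * Matrix.mat N N g) = (\<Sum>i<N. \<Sum>k<N. f (i, k) * g (k, i))"
  unfolding mtrace_def
  by (simp add: scalar_prod_def atLeast0LessThan)

lemma pauli_as_mat: "pauli n x = Matrix.mat (2 ^ n) (2 ^ n) (\<lambda>(k, i). pe n x k i)"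
  unfolding pauli_def pe_def by simp

definition zt :: "nat \<Rightarrow> (nat \<Rightarrow> complex) \<Rightarrow> bool list \<Rightarrow> complex" where
  "zt n \<psi> x = (\<Sum>i<2 ^ n. \<Sum>k<2 ^ n. (\<psi> i * cnj (\<psi> k)) * pe n x k i)"

lemma trace_pauli:
  "mtrace (Matrix.mat (2 ^ n) (2 ^ n) (\<lambda>(i, j). \<psi> i * cnj (\<psi> j)) * pauli n x) = zt n \<psi> x"
  unfolding pauli_as_mat trace_mult_mat zt_def by simp

lemma zt_real: "cnj (zt n \<psi> x) = zt n \<psi> x"
proof -
  have "cnj (zt n \<psi> x) = (\<Sum>i<2 ^ n. \<Sum>k<2 ^ n. (cnj (\<psi> i) * \<psi> k) * pe n x i k)"
    unfolding zt_def by (simp add: pe_cnj)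
  also have "\<dots> = (\<Sum>k<2 ^ n. \<Sum>i<2 ^ n. (cnj (\<psi> i) * \<psi> k) * pe n x i k)"
    by (rule sum.swap)
  also have "\<dots> = zt n \<psi> x"
    unfolding zt_def by (intro sum.cong refl) (simp add: mult_ac)
  finally show ?thesis .
qed

lemma zt_Im: "Im (zt n \<psi> x) = 0"
  using zt_real[of n \<psi> x] by (metis cnj.simps(2) complex_cnj_cancel_iff equation_minus_iff
        minus_complex.sel(2) diff_self zero_complex.sel(2) Im_complex_of_real Reals_cnj_iff complex_is_Real_iff)

lemma zt_eq_Re: "zt n \<psi> x = complex_of_real (Re (zt n \<psi> x))"
  using zt_Im[of n \<psi> x] by (simp add: complex_eq_iff)

lemma amgm: "a * b \<le> (a\<^sup>2 + b\<^sup>2) / (2::real)"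
proof -
  have "0 \<le> (a - b)\<^sup>2" by simp
  then show ?thesis by (simp add: power2_eq_square algebra_simps)
qed

lemma zt_bound:
  assumes "(\<Sum>i<2 ^ n. (cmod (\<psi> i))\<^sup>2) = 1"
  shows "cmod (zt n \<psi> x) \<le> 1"
proof -
  let ?N = "2 ^ n :: nat"
  have "cmod (zt n \<psi> x) \<le> (\<Sum>i<?N. \<Sum>k<?N. cmod (\<psi> i) * cmod (\<psi> k) * cmod (pe n x k i))"
    unfolding zt_def
    by (rule order_trans[OF norm_sum sum_mono], rule order_trans[OF norm_sum sum_mono])
       (simp add: norm_mult)
  also have "\<dots> \<le> (\<Sum>i<?N. \<Sum>k<?N. ((cmod (\<psi> i))\<^sup>2 + (cmod (\<psi> k))\<^sup>2) / 2 * cmod (pe n x k i))"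
    by (intro sum_mono mult_right_mono amgm) auto
  also have "\<dots> = (\<Sum>i<?N. (cmod (\<psi> i))\<^sup>2 * (\<Sum>k<?N. cmod (pe n x k i))) / 2
                 + (\<Sum>k<?N. (cmod (\<psi> k))\<^sup>2 * (\<Sum>i<?N. cmod (pe n x k i))) / 2"
  proof -
    have eq: "((cmod (\<psi> i))\<^sup>2 + (cmod (\<psi> k))\<^sup>2) / 2 * cmod (pe n x k i) =
       (cmod (\<psi> i))\<^sup>2 * cmod (pe n x k i) / 2 + (cmod (\<psi> k))\<^sup>2 * cmod (pe n x k i) / 2" for i k
      by (simp add: field_simps)
    have "(\<Sum>i<?N. \<Sum>k<?N. ((cmod (\<psi> i))\<^sup>2 + (cmod (\<psi> k))\<^sup>2) / 2 * cmod (pe n x k i))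
       = (\<Sum>i<?N. \<Sum>k<?N. (cmod (\<psi> i))\<^sup>2 * cmod (pe n x k i)) / 2
         + (\<Sum>i<?N. \<Sum>k<?N. (cmod (\<psi> k))\<^sup>2 * cmod (pe n x k i)) / 2"
      by (simp only: eq sum.distrib sum_divide_distrib)
    also have "(\<Sum>i<?N. \<Sum>k<?N. (cmod (\<psi> k))\<^sup>2 * cmod (pe n x k i)) =
               (\<Sum>k<?N. \<Sum>i<?N. (cmod (\<psi> k))\<^sup>2 * cmod (pe n x k i))"
      by (rule sum.swap)
    finally show ?thesis by (simp add: sum_distrib_left)
  qed
  also have "\<dots> = 1"
    using assms by (simp add: pe_rowsum pe_colsum)
  finally show ?thesis .
qed

lemma delta2:
  fixes f :: "nat \<Rightarrow> nat \<Rightarrow> 'a::comm_semiring_1"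
  assumes "k0 < N" "l0 < N"
  shows "(\<Sum>k<N. \<Sum>l<N. f k l * (if k = k0 \<and> l = l0 then c else 0)) = f k0 l0 * c"
proof -
  have inner: "(\<Sum>l<N. f k l * (if k = k0 \<and> l = l0 then c else 0)) = (if k = k0 then f k l0 * c else 0)" for k
  proof (cases "k = k0")
    case True
    have "(\<Sum>l<N. f k l * (if k = k0 \<and> l = l0 then c else 0)) = (\<Sum>l<N. if l = l0 then f k l * c else 0)"
      by (intro sum.cong refl) (simp add: True)
    also have "\<dots> = f k l0 * c" using assms(2) by (simp add: sum.delta')
    finally show ?thesis using True by simp
  next
    case False
    then show ?thesis by simp
  qed
  have "(\<Sum>k<N. \<Sum>l<N. f k l * (if k = k0 \<and> l = l0 then c else 0)) = (\<Sum>k<N. if k = k0 then f k l0 * c else 0)"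
    by (simp only: inner)
  also have "\<dots> = f k0 l0 * c" using assms(1) by (simp add: sum.delta')
  finally show ?thesis .
qed

lemma zt_completeness:
  "(\<Sum>x\<in>pauli_strings n. zt n \<psi> x * zt n \<phi> x) =
     2 ^ n * (\<Sum>i<2 ^ n. \<Sum>k<2 ^ n. (\<psi> i * cnj (\<psi> k)) * (\<phi> k * cnj (\<phi> i)))"
proof -
  let ?N = "2 ^ n :: nat"
  define a where "a i k = \<psi> i * cnj (\<psi> k)" for i k
  define b where "b i k = \<phi> i * cnj (\<phi> k)" for i k
  have "(\<Sum>x\<in>pauli_strings n. zt n \<psi> x * zt n \<phi> x) =
      (\<Sum>x\<in>pauli_strings n. \<Sum>i<?N. \<Sum>j<?N. \<Sum>k<?N. \<Sum>l<?N. a i k * b j l * (pe n x k i * pe n x l j))"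
    unfolding zt_def a_def[symmetric] b_def[symmetric] sum_product
    by (intro sum.cong refl) (simp add: mult_ac)
  also have "\<dots> = (\<Sum>i<?N. \<Sum>j<?N. \<Sum>k<?N. \<Sum>l<?N. \<Sum>x\<in>pauli_strings n. a i k * b j l * (pe n x k i * pe n x l j))"
    by (simp only: sum.swap[of _ "pauli_strings n"])
  also have "\<dots> = (\<Sum>i<?N. \<Sum>j<?N. \<Sum>k<?N. \<Sum>l<?N. (a i k * b j l) * (if k = j \<and> l = i then 2 ^ n else 0))"
    by (intro sum.cong refl) (auto simp: sum_distrib_left[symmetric] completeness)
  also have "\<dots> = (\<Sum>i<?N. \<Sum>j<?N. (a i j * b j i) * 2 ^ n)"
    by (intro sum.cong refl delta2[where f = "\<lambda>k l. a _ k * b _ l"]) auto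
  finally show ?thesis
    by (simp add: sum_distrib_left a_def b_def mult_ac)
qed

lemma finite_PS [simp]: "finite (pauli_strings n)"
  unfolding pauli_strings_def using finite_lists_length_eq[of "UNIV :: bool set" "2 * n"] by simp

lemma pure_stateE:
  assumes "pure_state n \<rho>"
  obtains \<psi> where "(\<Sum>i<2 ^ n. (cmod (\<psi> i))\<^sup>2) = 1"
    "\<rho> = Matrix.mat (2 ^ n) (2 ^ n) (\<lambda>(i, j). \<psi> i * cnj (\<psi> j))"
    "\<And>x. alpha n \<rho> x = Re (zt n \<psi> x)"
  using assms unfolding pure_state_def alpha_def by (auto simp: trace_pauli)

lemma alpha_bound:
  assumes "pure_state n \<rho>"
  shows "\<bar>alpha n \<rho> x\<bar> \<le> 1"
proof -
  obtain \<psi> where 1: "(\<Sum>i<2 ^ n. (cmod (\<psi> i))\<^sup>2) = 1" and 3: "\<And>x. alpha n \<rho> x = Re (zt n \<psi> x)"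
    using pure_stateE[OF assms] by metis
  show ?thesis unfolding 3 using zt_bound[OF 1, of x] abs_Re_le_cmod[of "zt n \<psi> x"] by linarith
qed

lemma alpha_sq_le: "pure_state n \<rho> \<Longrightarrow> (alpha n \<rho> x)\<^sup>2 \<le> 1"
  using alpha_bound[of n \<rho> x] by (simp add: abs_square_le_1)

lemma alpha_cross:
  assumes "pure_state n \<rho>" "pure_state n \<sigma>"
  shows "(\<Sum>x\<in>pauli_strings n. alpha n \<rho> x * alpha n \<sigma> x) = 2 ^ n * Re (mtrace (\<rho> * \<sigma>))"
proof -
  obtain \<psi> where 2: "\<rho> = Matrix.mat (2 ^ n) (2 ^ n) (\<lambda>(i, j). \<psi> i * cnj (\<psi> j))"
      and 3: "\<And>x. alpha n \<rho> x = Re (zt n \<psi> x)"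
    using pure_stateE[OF assms(1)] by metis
  obtain \<phi> where s2: "\<sigma> = Matrix.mat (2 ^ n) (2 ^ n) (\<lambda>(i, j). \<phi> i * cnj (\<phi> j))"
      and s3: "\<And>x. alpha n \<sigma> x = Re (zt n \<phi> x)"
    using pure_stateE[OF assms(2)] by metis
  have "(\<Sum>x\<in>pauli_strings n. alpha n \<rho> x * alpha n \<sigma> x) = Re (\<Sum>x\<in>pauli_strings n. zt n \<psi> x * zt n \<phi> x)"
    unfolding 3 s3 Re_sum by (intro sum.cong refl) (simp add: zt_Im)
  also have "\<dots> = 2 ^ n * Re (mtrace (\<rho> * \<sigma>))"
    unfolding zt_completeness 2 s2 trace_mult_mat by simp
  finally show ?thesis .
qed

lemma trace_self:
  assumes "pure_state n \<rho>"
  shows "Re (mtrace (\<rho> * \<rho>)) = 1"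
proof -
  obtain \<psi> where 1: "(\<Sum>i<2 ^ n. (cmod (\<psi> i))\<^sup>2) = 1"
     and 2: "\<rho> = Matrix.mat (2 ^ n) (2 ^ n) (\<lambda>(i, j). \<psi> i * cnj (\<psi> j))"
    using pure_stateE[OF assms] by metis
  have e: "\<psi> i * cnj (\<psi> k) * (\<psi> k * cnj (\<psi> i)) = complex_of_real ((cmod (\<psi> i))\<^sup>2 * (cmod (\<psi> k))\<^sup>2)" for i k
  proof -
    have "\<psi> i * cnj (\<psi> k) * (\<psi> k * cnj (\<psi> i)) = (\<psi> i * cnj (\<psi> i)) * (\<psi> k * cnj (\<psi> k))"
      by (simp add: mult_ac)
    also have "\<dots> = complex_of_real ((cmod (\<psi> i))\<^sup>2 * (cmod (\<psi> k))\<^sup>2)"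
      by (simp only: of_real_mult complex_norm_square)
    finally show ?thesis .
  qed
  have "Re (mtrace (\<rho> * \<rho>)) = (\<Sum>i<2 ^ n. \<Sum>k<2 ^ n. (cmod (\<psi> i))\<^sup>2 * (cmod (\<psi> k))\<^sup>2)"
    unfolding 2 trace_mult_mat by (simp add: e Re_sum)
  also have "\<dots> = 1" using 1 by (simp add: sum_distrib_left[symmetric] sum_distrib_right[symmetric])
  finally show ?thesis .
qed

lemma alpha_sq_sum:
  assumes "pure_state n \<rho>"
  shows "(\<Sum>x\<in>pauli_strings n. (alpha n \<rho> x)\<^sup>2) = 2 ^ n"
  using alpha_cross[OF assms assms] trace_self[OF assms] by (simp add: power2_eq_square)

lemma p_state_nonneg: "p_state n \<rho> x \<ge> 0"
  by (simp add: p_state_def)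

lemma p_mix_nonneg: "p_mix n \<rho> \<sigma> x \<ge> 0"
  by (simp add: p_mix_def p_state_nonneg)

lemma p_state_sum:
  assumes "pure_state n \<rho>"
  shows "(\<Sum>x\<in>pauli_strings n. p_state n \<rho> x) = 1"
  unfolding p_state_def sum_divide_distrib[symmetric] alpha_sq_sum[OF assms] by simp

lemma p_mix_sum:
  assumes "pure_state n \<rho>" "pure_state n \<sigma>"
  shows "(\<Sum>x\<in>pauli_strings n. p_mix n \<rho> \<sigma> x) = 1"
  unfolding p_mix_def sum_divide_distrib[symmetric] sum.distrib p_state_sum[OF assms(1)] p_state_sum[OF assms(2)]
  by simp

lemma frac_helper:
  fixes S T N :: real
  assumes "S \<noteq> 0" "N > 0"
  shows "S / (2 * N) * (T / (2 * S)) = T / (4 * N)"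
  using assms by (simp add: field_simps)

lemma p_mix_G:
  "p_mix n \<rho> \<sigma> x * G g0 (alpha n \<rho> x) (alpha n \<sigma> x) = (alpha n \<rho> x + alpha n \<sigma> x)\<^sup>2 / (4 * 2 ^ n)"
proof (cases "alpha n \<rho> x = 0 \<and> alpha n \<sigma> x = 0")
  case True
  then show ?thesis by (simp add: p_mix_def p_state_def G_def)
next
  case False
  then have "(alpha n \<rho> x)\<^sup>2 + (alpha n \<sigma> x)\<^sup>2 \<noteq> 0"
    by (simp add: add_nonneg_eq_0_iff)
  define a where "a = alpha n \<rho> x"
  define b where "b = alpha n \<sigma> x"
  have S: "a\<^sup>2 + b\<^sup>2 \<noteq> 0" using \<open>(alpha n \<rho> x)\<^sup>2 + (alpha n \<sigma> x)\<^sup>2 \<noteq> 0\<close> by (simp add: a_def b_def)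
  have pm: "p_mix n \<rho> \<sigma> x = (a\<^sup>2 + b\<^sup>2) / (2 * 2 ^ n)"
    by (simp add: p_mix_def p_state_def a_def b_def add_divide_distrib)
  have g: "G g0 (alpha n \<rho> x) (alpha n \<sigma> x) = (a + b)\<^sup>2 / (2 * (a\<^sup>2 + b\<^sup>2))"
    using False unfolding G_def a_def b_def by (simp only: if_False simp_thms)
  have "(a\<^sup>2 + b\<^sup>2) / (2 * 2 ^ n) * ((a + b)\<^sup>2 / (2 * (a\<^sup>2 + b\<^sup>2))) = (a + b)\<^sup>2 / (4 * 2 ^ n)"
    using frac_helper[OF S, of "2 ^ n" "(a + b)\<^sup>2"] by simp
  then show ?thesis unfolding pm g a_def b_def .
qed

lemma F_identity:
  assumes "pure_state n \<rho>" "pure_state n \<sigma>"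
  shows "(\<Sum>x\<in>pauli_strings n. p_mix n \<rho> \<sigma> x * G g0 (alpha n \<rho> x) (alpha n \<sigma> x))
         = (1 + Re (mtrace (\<rho> * \<sigma>))) / 2"
proof -
  have "(\<Sum>x\<in>pauli_strings n. p_mix n \<rho> \<sigma> x * G g0 (alpha n \<rho> x) (alpha n \<sigma> x))
     = ((\<Sum>x\<in>pauli_strings n. (alpha n \<rho> x)\<^sup>2) + 2 * (\<Sum>x\<in>pauli_strings n. alpha n \<rho> x * alpha n \<sigma> x)
        + (\<Sum>x\<in>pauli_strings n. (alpha n \<sigma> x)\<^sup>2)) / (4 * 2 ^ n)"
    unfolding p_mix_G power2_sum
    by (simp add: sum_divide_distrib[symmetric] sum.distrib sum_distrib_left mult.assoc)
  also have "\<dots> = (1 + Re (mtrace (\<rho> * \<sigma>))) / 2"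
    unfolding alpha_sq_sum[OF assms(1)] alpha_sq_sum[OF assms(2)] alpha_cross[OF assms]
    by (simp add: field_simps)
  finally show ?thesis .
qed

lemma renyi_as_sum:
  assumes "pure_state n \<rho>"
  shows "stabilizer_renyi1 n \<rho> = (\<Sum>x\<in>pauli_strings n.
           if p_state n \<rho> x = 0 then 0 else p_state n \<rho> x * (- log 2 ((alpha n \<rho> x)\<^sup>2)))"
proof -
  let ?p = "p_state n \<rho>" and ?A = "alpha n \<rho>"
  have pt: "- (if ?p x = 0 then 0 else ?p x * log 2 (?p x)) =
        (if ?p x = 0 then 0 else ?p x * (- log 2 ((?A x)\<^sup>2))) + real n * ?p x" for x
  proof (cases "?p x = 0")
    case True then show ?thesis by simp
  next
    case False
    then have A2: "(?A x)\<^sup>2 > 0" by (simp add: p_state_def)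
    have "log 2 (?p x) = log 2 ((?A x)\<^sup>2) - log 2 (2 ^ n)"
      unfolding p_state_def using A2 by (simp add: log_divide)
    also have "log 2 (2 ^ n) = real n" by (simp add: log_nat_power)
    finally have L: "log 2 ((?A x)\<^sup>2) = log 2 (?p x) + real n" by simp
    show ?thesis using False by (simp add: L algebra_simps)
  qed
  have "stabilizer_renyi1 n \<rho> = (\<Sum>x\<in>pauli_strings n. - (if ?p x = 0 then 0 else ?p x * log 2 (?p x))) - real n"
    unfolding stabilizer_renyi1_def shannon_def by (simp add: sum_negf)
  also have "\<dots> = (\<Sum>x\<in>pauli_strings n. if ?p x = 0 then 0 else ?p x * (- log 2 ((?A x)\<^sup>2)))
                   + real n * (\<Sum>x\<in>pauli_strings n. ?p x) - real n"
    unfolding pt by (simp add: sum.distrib sum_distrib_left)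
  also have "\<dots> = (\<Sum>x\<in>pauli_strings n. if ?p x = 0 then 0 else ?p x * (- log 2 ((?A x)\<^sup>2)))"
    using p_state_sum[OF assms] by simp
  finally show ?thesis .
qed

lemma bad_mass:
  assumes pure: "pure_state n \<rho>" and M: "stabilizer_renyi1 n \<rho> \<le> M" and e: "\<epsilon> > 0"
  shows "(\<Sum>x\<in>{x\<in>pauli_strings n. (alpha n \<rho> x)\<^sup>2 < 2 powr (- M / \<epsilon>)}. p_state n \<rho> x) \<le> \<epsilon>"
    and "M \<ge> 0"
proof -
  let ?p = "p_state n \<rho>" and ?A = "alpha n \<rho>"
  define tm where "tm x = (if ?p x = 0 then 0 else ?p x * (- log 2 ((?A x)\<^sup>2)))" for x
  define B where "B = {x\<in>pauli_strings n. (alpha n \<rho> x)\<^sup>2 < 2 powr (- M / \<epsilon>)}"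
  have S: "stabilizer_renyi1 n \<rho> = (\<Sum>x\<in>pauli_strings n. tm x)"
    unfolding tm_def by (rule renyi_as_sum[OF pure])
  have tm_nonneg: "tm x \<ge> 0" for x
  proof (cases "?p x = 0")
    case False
    then have A2: "(?A x)\<^sup>2 > 0" by (simp add: p_state_def)
    have "log 2 ((?A x)\<^sup>2) \<le> 0" using A2 alpha_sq_le[OF pure, of x] by simp
    then have "?p x * log 2 ((?A x)\<^sup>2) \<le> 0" using p_state_nonneg[of n \<rho> x] by (rule mult_nonneg_nonpos[rotated])
    then show ?thesis using False by (simp add: tm_def)
  qed (simp add: tm_def)
  have S0: "stabilizer_renyi1 n \<rho> \<ge> 0" unfolding S by (intro sum_nonneg) (simp add: tm_nonneg)
  then show M0: "M \<ge> 0" using M by simp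
  have Bsub: "B \<subseteq> pauli_strings n" by (auto simp: B_def)
  have sumB: "(\<Sum>x\<in>B. tm x) \<le> M"
    using sum_mono2[OF finite_PS Bsub, of tm] tm_nonneg S M by simp
  have tm_big: "tm x > ?p x * (M / \<epsilon>)" if "x \<in> B" "?p x \<noteq> 0" for x
  proof -
    have A2: "(?A x)\<^sup>2 > 0" using that(2) by (simp add: p_state_def)
    have "log 2 ((?A x)\<^sup>2) < log 2 (2 powr (- M / \<epsilon>))"
      using log_less_cancel_iff[of 2 "(?A x)\<^sup>2" "2 powr (- M / \<epsilon>)"] that(1) A2 by (simp add: B_def)
    then have "- log 2 ((?A x)\<^sup>2) > M / \<epsilon>" by simp
    moreover have "?p x > 0" using that(2) p_state_nonneg[of n \<rho> x] by simp
    ultimately have "?p x * (M / \<epsilon>) < ?p x * (- log 2 ((?A x)\<^sup>2))"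
      by (intro mult_strict_left_mono)
    then show ?thesis using that(2) unfolding tm_def by simp
  qed
  show "(\<Sum>x\<in>B. ?p x) \<le> \<epsilon>"
  proof (cases "M > 0")
    case True
    have "(\<Sum>x\<in>B. ?p x * (M / \<epsilon>)) \<le> (\<Sum>x\<in>B. tm x)"
    proof (rule sum_mono)
      fix x assume "x \<in> B"
      then show "?p x * (M / \<epsilon>) \<le> tm x"
        using tm_big[of x] by (cases "?p x = 0") (auto simp: tm_def)
    qed
    also have "\<dots> \<le> M" by (rule sumB)
    finally have "(\<Sum>x\<in>B. ?p x) * (M / \<epsilon>) \<le> M" by (simp only: sum_distrib_right)
    then have "(\<Sum>x\<in>B. ?p x) * M \<le> \<epsilon> * M" using e by (simp add: field_simps)
    then show ?thesis using True by simp
  next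
    case False
    then have "M = 0" using M0 by simp
    have "(\<Sum>x\<in>B. tm x) = 0"
      using sumB \<open>M = 0\<close> sum_nonneg[of B tm] tm_nonneg by (simp add: order_antisym)
    then have z: "\<forall>x\<in>B. tm x = 0"
      using sum_nonneg_eq_0_iff[of B tm] tm_nonneg finite_subset[OF Bsub finite_PS] by simp
    have "\<forall>x\<in>B. ?p x = 0"
    proof (rule ballI, rule ccontr)
      fix x assume "x \<in> B" "?p x \<noteq> 0"
      then have "tm x > ?p x * (M / \<epsilon>)" by (rule tm_big)
      then show False using z \<open>x \<in> B\<close> \<open>M = 0\<close> by simp
    qed
    then show ?thesis using e by simp
  qed
qed

lemma set_seq_pmf:
  "xs \<in> set_pmf (seq_pmf ps) \<Longrightarrow> length xs = length ps \<and> (\<forall>i<length ps. xs ! i \<in> set_pmf (ps ! i))"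
proof (induction ps arbitrary: xs)
  case Nil
  then show ?case by simp
next
  case (Cons p ps)
  then obtain y ys where "xs = y # ys" "y \<in> set_pmf p" "ys \<in> set_pmf (seq_pmf ps)" by auto
  with Cons.IH[of ys] show ?case by (auto simp: nth_Cons split: nat.splits)
qed

lemma set_iid: "xs \<in> set_pmf (iid_pmf N D) \<Longrightarrow> length xs = N \<and> set xs \<subseteq> set_pmf D"
  unfolding iid_pmf_def using set_seq_pmf[of xs "replicate N D"] by (auto simp: in_set_conv_nth)

lemma finite_set_seq: "(\<forall>p\<in>set ps. finite (set_pmf p)) \<Longrightarrow> finite (set_pmf (seq_pmf ps))"
proof (induction ps)
  case Nil
  then show ?case by simp
next
  case (Cons p ps)
  have "set_pmf (seq_pmf (p # ps)) = (\<Union>x\<in>set_pmf p. \<Union>xs\<in>set_pmf (seq_pmf ps). {x # xs})" by simp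
  then show ?case using Cons by simp
qed

lemma finite_set_iid: "finite (set_pmf D) \<Longrightarrow> finite (set_pmf (iid_pmf N D))"
  unfolding iid_pmf_def by (intro finite_set_seq) simp

lemma iid_bind: "bind_pmf (iid_pmf N p) (\<lambda>xs. seq_pmf (map f xs)) = iid_pmf N (bind_pmf p f)"
proof (induction N)
  case 0
  then show ?case by (simp add: iid_pmf_def bind_return_pmf)
next
  case (Suc N)
  have "bind_pmf (iid_pmf (Suc N) p) (\<lambda>xs. seq_pmf (map f xs)) =
        bind_pmf p (\<lambda>x. bind_pmf (iid_pmf N p) (\<lambda>xs. bind_pmf (f x) (\<lambda>y.
           bind_pmf (seq_pmf (map f xs)) (\<lambda>ys. return_pmf (y # ys)))))"
    by (simp add: iid_pmf_def bind_assoc_pmf bind_return_pmf)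
  also have "\<dots> = bind_pmf p (\<lambda>x. bind_pmf (f x) (\<lambda>y. bind_pmf (bind_pmf (iid_pmf N p) (\<lambda>xs. seq_pmf (map f xs)))
           (\<lambda>ys. return_pmf (y # ys))))"
    by (subst bind_commute_pmf) (simp add: bind_assoc_pmf)
  also have "\<dots> = bind_pmf p (\<lambda>x. bind_pmf (f x) (\<lambda>y. bind_pmf (iid_pmf N (bind_pmf p f))
           (\<lambda>ys. return_pmf (y # ys))))"
    by (simp only: Suc)
  also have "\<dots> = iid_pmf (Suc N) (bind_pmf p f)"
    by (simp add: iid_pmf_def bind_assoc_pmf)
  finally show ?case .
qed

lemma hoeffding_len:
  fixes D :: "real pmf"
  assumes "set_pmf D \<subseteq> {a..b}" "a < b" "N > 0" "t \<ge> 0"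
  shows "measure_pmf.prob (iid_pmf N D)
           {xs. \<bar>sum_list xs / real (length xs) - measure_pmf.expectation D (\<lambda>x. x)\<bar> \<ge> t}
         \<le> 2 * exp (- 2 * real N * t\<^sup>2 / (b - a)\<^sup>2)"
proof -
  have "measure_pmf.prob (iid_pmf N D)
           {xs. \<bar>sum_list xs / real (length xs) - measure_pmf.expectation D (\<lambda>x. x)\<bar> \<ge> t}
      = measure_pmf.prob (iid_pmf N D)
           {xs. \<bar>sum_list xs / real N - measure_pmf.expectation D (\<lambda>x. x)\<bar> \<ge> t}"
  proof (intro measure_prob_cong_0)
    fix xs assume "xs \<in> {xs. \<bar>sum_list xs / real (length xs) - measure_pmf.expectation D (\<lambda>x. x)\<bar> \<ge> t} -
       {xs. \<bar>sum_list xs / real N - measure_pmf.expectation D (\<lambda>x. x)\<bar> \<ge> t}"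
    then show "pmf (iid_pmf N D) xs = 0" using set_iid[of xs N D] by (auto simp: pmf_eq_0_set_pmf)
  next
    fix xs assume "xs \<in> {xs. \<bar>sum_list xs / real N - measure_pmf.expectation D (\<lambda>x. x)\<bar> \<ge> t} -
       {xs. \<bar>sum_list xs / real (length xs) - measure_pmf.expectation D (\<lambda>x. x)\<bar> \<ge> t}"
    then show "pmf (iid_pmf N D) xs = 0" using set_iid[of xs N D] by (auto simp: pmf_eq_0_set_pmf)
  qed
  also have "\<dots> \<le> 2 * exp (- 2 * real N * t\<^sup>2 / (b - a)\<^sup>2)"
    by (rule hoeffding_iid[OF assms])
  finally show ?thesis .
qed

lemma mp_set: "set_pmf (measure_pauli n \<rho> x) \<subseteq> {-1..1}"
  unfolding measure_pauli_def by auto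

lemma mp_finite: "finite (set_pmf (measure_pauli n \<rho> x))"
  unfolding measure_pauli_def by simp

lemma mp_exp:
  assumes "\<bar>alpha n \<rho> x\<bar> \<le> 1"
  shows "measure_pmf.expectation (measure_pauli n \<rho> x) (\<lambda>y. y) = alpha n \<rho> x"
proof -
  have "0 \<le> (1 + alpha n \<rho> x) / 2" "(1 + alpha n \<rho> x) / 2 \<le> 1" using assms by auto
  then show ?thesis unfolding measure_pauli_def by (simp add: field_simps)
qed

lemma est_conc:
  assumes "\<bar>alpha n \<rho> x\<bar> \<le> 1" "N2 > 0" "t \<ge> 0"
  shows "measure_pmf.prob (iid_pmf N2 (measure_pauli n \<rho> x))
           {as. \<bar>emp_mean as - alpha n \<rho> x\<bar> \<ge> t} \<le> 2 * exp (- real N2 * t\<^sup>2 / 2)"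
  using hoeffding_len[where D="measure_pauli n \<rho> x" and a="-1" and b=1 and N=N2 and t=t, OF mp_set] assms
  unfolding emp_mean_def mp_exp[OF assms(1)] by (simp add: power2_eq_square mult_ac)

lemma G_range:
  assumes "0 \<le> g0" "g0 \<le> 1"
  shows "0 \<le> G g0 u v" "G g0 u v \<le> 1"
proof -
  have num: "(u + v)\<^sup>2 \<le> 2 * (u\<^sup>2 + v\<^sup>2)"
    using amgm[of u v] by (simp add: power2_sum)
  have "0 \<le> G g0 u v \<and> G g0 u v \<le> 1"
  proof (cases "u = 0 \<and> v = 0")
    case True then show ?thesis using assms by (simp add: G_def)
  next
    case False
    then have "u\<^sup>2 + v\<^sup>2 > 0" using sum_power2_gt_zero_iff[of u v] by blast
    then have d: "2 * (u\<^sup>2 + v\<^sup>2) > 0" by simp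
    have "G g0 u v = (u + v)\<^sup>2 / (2 * (u\<^sup>2 + v\<^sup>2))" using False unfolding G_def by (simp only: if_False simp_thms)
    moreover have "(u + v)\<^sup>2 / (2 * (u\<^sup>2 + v\<^sup>2)) \<le> 1" using num d by (simp add: divide_le_eq)
    moreover have "0 \<le> (u + v)\<^sup>2 / (2 * (u\<^sup>2 + v\<^sup>2))" using d by simp
    ultimately show ?thesis by simp
  qed
  then show "0 \<le> G g0 u v" "G g0 u v \<le> 1" by auto
qed

lemma round_pair:
  "protocol_round n \<rho> \<sigma> g0 N2 x =
     map_pmf (\<lambda>(as, bs). G g0 (emp_mean as) (emp_mean bs))
       (pair_pmf (iid_pmf N2 (measure_pauli n \<rho> x)) (iid_pmf N2 (measure_pauli n \<sigma> x)))"
  unfolding protocol_round_def map_pmf_def pair_pmf_def by (simp add: bind_assoc_pmf bind_return_pmf)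

lemma round_finite: "finite (set_pmf (protocol_round n \<rho> \<sigma> g0 N2 x))"
  unfolding round_pair by (simp add: finite_set_iid mp_finite)

lemma round_set:
  assumes "0 \<le> g0" "g0 \<le> 1"
  shows "set_pmf (protocol_round n \<rho> \<sigma> g0 N2 x) \<subseteq> {0..1}"
  unfolding round_pair using G_range[OF assms] by auto

lemma round_close:
  assumes a1: "\<bar>alpha n \<rho> x\<bar> \<le> 1" and a2: "\<bar>alpha n \<sigma> x\<bar> \<le> 1" and N2: "N2 > 0" and t: "t \<ge> 0"
    and g: "0 \<le> g0" "g0 \<le> 1" and c: "c \<ge> 0"
    and close: "\<And>u' v'. \<bar>u' - alpha n \<rho> x\<bar> < t \<Longrightarrow> \<bar>v' - alpha n \<sigma> x\<bar> < t \<Longrightarrow>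
         \<bar>G g0 u' v' - G g0 (alpha n \<rho> x) (alpha n \<sigma> x)\<bar> \<le> c"
  shows "\<bar>measure_pmf.expectation (protocol_round n \<rho> \<sigma> g0 N2 x) (\<lambda>y. y)
            - G g0 (alpha n \<rho> x) (alpha n \<sigma> x)\<bar> \<le> c + 4 * exp (- real N2 * t\<^sup>2 / 2)"
proof -
  define P1 where "P1 = iid_pmf N2 (measure_pauli n \<rho> x)"
  define P2 where "P2 = iid_pmf N2 (measure_pauli n \<sigma> x)"
  define Q where "Q = pair_pmf P1 P2"
  define \<phi> where "\<phi> = G g0 (alpha n \<rho> x) (alpha n \<sigma> x)"
  define h where "h = (\<lambda>(as, bs). G g0 (emp_mean as) (emp_mean bs))"
  define E1 where "E1 = {as. \<bar>emp_mean as - alpha n \<rho> x\<bar> \<ge> t}"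
  define E2 where "E2 = {bs. \<bar>emp_mean bs - alpha n \<sigma> x\<bar> \<ge> t}"
  have finQ: "finite (set_pmf Q)" unfolding Q_def P1_def P2_def by (simp add: finite_set_iid mp_finite)
  have intQ: "integrable (measure_pmf Q) f" for f :: "_ \<Rightarrow> real"
    by (rule integrable_measure_pmf_finite[OF finQ])
  have "measure_pmf.expectation (protocol_round n \<rho> \<sigma> g0 N2 x) (\<lambda>y. y) = measure_pmf.expectation Q h"
    unfolding round_pair Q_def P1_def P2_def h_def by simp
  then have "measure_pmf.expectation (protocol_round n \<rho> \<sigma> g0 N2 x) (\<lambda>y. y) - \<phi> =
      measure_pmf.expectation Q (\<lambda>z. h z - \<phi>)"
    using intQ by (simp add: Bochner_Integration.integral_diff measure_pmf.prob_space)
  also have "\<bar>\<dots>\<bar> \<le> measure_pmf.expectation Q (\<lambda>z. \<bar>h z - \<phi>\<bar>)"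
    by (rule integral_abs_bound)
  also have "\<dots> \<le> measure_pmf.expectation Q (\<lambda>z. c + indicator E1 (fst z) + indicator E2 (snd z))"
  proof (rule integral_mono[OF intQ intQ])
    fix z :: "real list \<times> real list"
    obtain as bs where z: "z = (as, bs)" by (cases z)
    show "\<bar>h z - \<phi>\<bar> \<le> c + indicator E1 (fst z) + indicator E2 (snd z)"
    proof (cases "as \<in> E1 \<or> bs \<in> E2")
      case True
      have "\<bar>h z - \<phi>\<bar> \<le> 1"
        using G_range[OF g, of "emp_mean as" "emp_mean bs"] G_range[OF g, of "alpha n \<rho> x" "alpha n \<sigma> x"]
        unfolding z h_def \<phi>_def by auto
      then show ?thesis using True c z by (auto simp: indicator_def)
    next
      case False
      then have "\<bar>emp_mean as - alpha n \<rho> x\<bar> < t" "\<bar>emp_mean bs - alpha n \<sigma> x\<bar> < t"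
        by (auto simp: E1_def E2_def)
      from close[OF this] show ?thesis using False z by (simp add: h_def \<phi>_def indicator_def)
    qed
  qed
  also have "\<dots> = c + measure_pmf.prob P1 E1 + measure_pmf.prob P2 E2"
    using intQ unfolding Q_def
    by (simp add: Bochner_Integration.integral_add measure_pmf.prob_space)
  also have "\<dots> \<le> c + 2 * exp (- real N2 * t\<^sup>2 / 2) + 2 * exp (- real N2 * t\<^sup>2 / 2)"
    using est_conc[OF a1 N2 t] est_conc[OF a2 N2 t] unfolding P1_def P2_def E1_def E2_def
    by (intro add_mono) auto
  finally show ?thesis unfolding \<phi>_def by simp
qed

lemma est_eq:
  "symmetric_estimator n \<rho> \<sigma> g0 pt N1 N2 =
     map_pmf (\<lambda>gs. sum_list gs / real N1) (iid_pmf N1 (bind_pmf pt (protocol_round n \<rho> \<sigma> g0 N2)))"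
  unfolding symmetric_estimator_def iid_bind[symmetric] map_pmf_def by (simp add: bind_assoc_pmf)

lemma sum_list_01: "set gs \<subseteq> {0..1} \<Longrightarrow> 0 \<le> sum_list gs \<and> sum_list gs \<le> real (length gs)"
  by (induction gs) auto

lemma ln_le_log2: "z > 1 \<Longrightarrow> ln z \<le> log 2 z"
proof -
  assume z: "z > 1"
  have "ln z > 0" using z by simp
  moreover have "0 < ln (2::real)" "ln (2::real) < 1" using ln_2_less_1 by auto
  ultimately have "ln z \<le> ln z / ln 2" by (simp add: le_divide_eq)
  then show ?thesis by (simp add: log_def)
qed

lemma exp_bound: "z > 1 \<Longrightarrow> A \<ge> log 2 z \<Longrightarrow> exp (- A) \<le> 1 / z"
proof -
  assume z: "z > 1" and A: "A \<ge> log 2 z"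
  have "- A \<le> - ln z" using ln_le_log2[OF z] A by simp
  then have "exp (- A) \<le> exp (- ln z)" by simp
  also have "\<dots> = 1 / z" using z by (simp add: exp_minus inverse_eq_divide)
  finally show ?thesis .
qed

lemma assembly:
  fixes PS B :: "'a set" and pt pm \<psi> \<phi> :: "'a \<Rightarrow> real"
  assumes fin: "finite PS" and BPS: "B \<subseteq> PS"
    and pm0: "\<And>x. x \<in> PS \<Longrightarrow> pm x \<ge> 0" and pm1: "(\<Sum>x\<in>PS. pm x) = 1"
    and \<psi>01: "\<And>x. x \<in> PS \<Longrightarrow> \<bar>\<psi> x\<bar> \<le> 1"
    and d1: "\<And>x. x \<in> PS \<Longrightarrow> \<bar>\<psi> x - \<phi> x\<bar> \<le> 1"
    and tv: "(\<Sum>x\<in>PS. \<bar>pm x - pt x\<bar>) \<le> D"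
    and bad: "(\<Sum>x\<in>B. pm x) \<le> e"
    and good: "\<And>x. x \<in> PS - B \<Longrightarrow> \<bar>\<psi> x - \<phi> x\<bar> \<le> c" and c: "c \<ge> 0"
  shows "\<bar>(\<Sum>x\<in>PS. pt x * \<psi> x) - (\<Sum>x\<in>PS. pm x * \<phi> x)\<bar> \<le> D + e + c"
proof -
  have split: "(\<Sum>x\<in>PS. pt x * \<psi> x) - (\<Sum>x\<in>PS. pm x * \<phi> x) =
      (\<Sum>x\<in>PS. (pt x - pm x) * \<psi> x) + (\<Sum>x\<in>PS. pm x * (\<psi> x - \<phi> x))"
    by (simp add: sum_subtractf[symmetric] sum.distrib[symmetric] algebra_simps)
  have A: "\<bar>\<Sum>x\<in>PS. (pt x - pm x) * \<psi> x\<bar> \<le> D"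
  proof -
    have "\<bar>\<Sum>x\<in>PS. (pt x - pm x) * \<psi> x\<bar> \<le> (\<Sum>x\<in>PS. \<bar>(pt x - pm x) * \<psi> x\<bar>)"
      by (rule sum_abs)
    also have "\<dots> \<le> (\<Sum>x\<in>PS. \<bar>pm x - pt x\<bar>)"
    proof (rule sum_mono)
      fix x assume "x \<in> PS"
      then have "\<bar>pt x - pm x\<bar> * \<bar>\<psi> x\<bar> \<le> \<bar>pt x - pm x\<bar> * 1"
        using \<psi>01 by (intro mult_left_mono) auto
      then show "\<bar>(pt x - pm x) * \<psi> x\<bar> \<le> \<bar>pm x - pt x\<bar>" by (simp add: abs_mult abs_minus_commute)
    qed
    finally show ?thesis using tv by linarith
  qed
  have Bfin: "finite B" using finite_subset[OF BPS fin] .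
  have Bm: "\<bar>\<Sum>x\<in>PS. pm x * (\<psi> x - \<phi> x)\<bar> \<le> e + c"
  proof -
    have "\<bar>\<Sum>x\<in>PS. pm x * (\<psi> x - \<phi> x)\<bar> \<le> (\<Sum>x\<in>PS. pm x * \<bar>\<psi> x - \<phi> x\<bar>)"
      using pm0 by (intro order_trans[OF sum_abs] sum_mono) (simp add: abs_mult)
    also have "\<dots> = (\<Sum>x\<in>B. pm x * \<bar>\<psi> x - \<phi> x\<bar>) + (\<Sum>x\<in>PS - B. pm x * \<bar>\<psi> x - \<phi> x\<bar>)"
      by (simp only: sum.subset_diff[OF BPS fin] add.commute)
    also have "(\<Sum>x\<in>B. pm x * \<bar>\<psi> x - \<phi> x\<bar>) \<le> (\<Sum>x\<in>B. pm x)"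
      using BPS pm0 d1 by (intro sum_mono mult_left_le) auto
    also have "(\<Sum>x\<in>PS - B. pm x * \<bar>\<psi> x - \<phi> x\<bar>) \<le> (\<Sum>x\<in>PS - B. pm x * c)"
      using pm0 good by (intro sum_mono mult_left_mono) auto
    also have "(\<Sum>x\<in>PS - B. pm x * c) \<le> (\<Sum>x\<in>PS. pm x * c)"
      using pm0 c by (intro sum_mono2[OF fin]) auto
    also have "(\<Sum>x\<in>PS. pm x * c) = c" using pm1 by (simp add: sum_distrib_right[symmetric])
    finally show ?thesis using bad by linarith
  qed
  show ?thesis unfolding split using A Bm by (smt (verit) abs_triangle_ineq)
qed

lemma powr_sq: "(2 powr (a::real))\<^sup>2 = 2 powr (2 * a)"
  by (simp only: power2_eq_square mult_2 powr_add)

lemma min_sq: "0 \<le> (a::real) \<Longrightarrow> 0 \<le> b \<Longrightarrow> (min a b)\<^sup>2 = min (a\<^sup>2) (b\<^sup>2)"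
proof -
  assume "0 \<le> a" "0 \<le> b"
  then have "a\<^sup>2 \<le> b\<^sup>2 \<longleftrightarrow> a \<le> b" using abs_le_square_iff[of a b] by simp
  then show ?thesis by (simp add: min_def)
qed

lemma exp_01:
  fixes p :: "real pmf"
  assumes "finite (set_pmf p)" "set_pmf p \<subseteq> {0..1}"
  shows "0 \<le> measure_pmf.expectation p (\<lambda>y. y)" "measure_pmf.expectation p (\<lambda>y. y) \<le> 1"
proof -
  have int: "integrable (measure_pmf p) f" for f :: "real \<Rightarrow> real"
    by (rule integrable_measure_pmf_finite[OF assms(1)])
  show "0 \<le> measure_pmf.expectation p (\<lambda>y. y)"
    using assms(2) by (intro integral_nonneg_AE) (auto simp: AE_measure_pmf_iff)
  have "measure_pmf.expectation p (\<lambda>y. y) \<le> measure_pmf.expectation p (\<lambda>y. 1)"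
    using assms(2) by (intro integral_mono_AE int) (auto simp: AE_measure_pmf_iff)
  then show "measure_pmf.expectation p (\<lambda>y. y) \<le> 1" by simp
qed

lemma log2_8: "log 2 (8::real) = 3"
proof -
  have "log 2 (2 powr (3::real)) = 3" by (rule log_powr_cancel) auto
  moreover have "2 powr (3::real) = 8" by simp
  ultimately show ?thesis by simp
qed

theorem corollary6:
  fixes n N1 N2 :: nat and \<rho> \<sigma> :: "complex mat" and \<epsilon> \<delta> \<Delta> g0 :: real
    and pt :: "bool list pmf"
  assumes "pure_state n \<rho>" and "pure_state n \<sigma>"
    and "\<epsilon> > 0" and "\<delta> > 0"
    and "0 \<le> g0" and "g0 \<le> 1"
    and "set_pmf pt \<subseteq> pauli_strings n"
    and "tv_dist (pauli_strings n) (p_mix n \<rho> \<sigma>) (pmf pt) < \<Delta>"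
    and "M1 = max (stabilizer_renyi1 n \<rho>) (stabilizer_renyi1 n \<sigma>)"
    and "F = (1 + Re (mtrace (\<rho> * \<sigma>))) / 2"
    and "real N1 \<ge> 1 / (2 * \<epsilon>\<^sup>2) * log 2 (8 / \<delta>)"
    and "real N2 \<ge> 2 / min (\<epsilon> ^ 4) (\<epsilon>\<^sup>2 * 2 powr (- 2 * M1 / \<epsilon>)) * log 2 (8 * real N1 / \<delta>)"
  shows "measure_pmf.prob (symmetric_estimator n \<rho> \<sigma> g0 pt N1 N2)
           {y. \<bar>y - F\<bar> \<le> 5 * \<epsilon> + 2 * \<Delta>} \<ge> 1 - \<delta>"
proof -
  note pure1 = assms(1) and pure2 = assms(2) and e0 = assms(3) and d0 = assms(4)
  note g = assms(5) assms(6)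
  define PS where "PS = pauli_strings n"
  define R where "R = protocol_round n \<rho> \<sigma> g0 N2"
  define D where "D = bind_pmf pt R"
  define \<psi> where "\<psi> x = measure_pmf.expectation (R x) (\<lambda>y. y)" for x
  define \<phi> where "\<phi> x = G g0 (alpha n \<rho> x) (alpha n \<sigma> x)" for x
  define pm where "pm = p_mix n \<rho> \<sigma>"
  have finPS: "finite PS" by (simp add: PS_def)
  have est: "symmetric_estimator n \<rho> \<sigma> g0 pt N1 N2 = map_pmf (\<lambda>gs. sum_list gs / real N1) (iid_pmf N1 D)"
    by (simp add: est_eq D_def R_def)
  have D01: "set_pmf D \<subseteq> {0..1}"
    unfolding D_def R_def set_bind_pmf using round_set[OF g] by blast
  have \<psi>01: "0 \<le> \<psi> x \<and> \<psi> x \<le> 1" for x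
    using exp_01[OF round_finite round_set[OF g]] by (simp add: \<psi>_def R_def)
  have \<phi>01: "0 \<le> \<phi> x \<and> \<phi> x \<le> 1" for x
    using G_range[OF g] by (simp add: \<phi>_def)
  have pm0: "pm x \<ge> 0" for x by (simp add: pm_def p_mix_nonneg)
  have pm1: "(\<Sum>x\<in>PS. pm x) = 1" using p_mix_sum[OF pure1 pure2] by (simp add: pm_def PS_def)
  have F_eq: "F = (\<Sum>x\<in>PS. pm x * \<phi> x)"
    using F_identity[OF pure1 pure2, of g0] assms(10) by (simp add: PS_def pm_def \<phi>_def)
  have F01: "0 \<le> F \<and> F \<le> 1"
  proof -
    have "0 \<le> (\<Sum>x\<in>PS. pm x * \<phi> x)" using pm0 \<phi>01 by (intro sum_nonneg) simp
    moreover have "(\<Sum>x\<in>PS. pm x * \<phi> x) \<le> (\<Sum>x\<in>PS. pm x)"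
      using pm0 \<phi>01 by (intro sum_mono mult_left_le) auto
    ultimately show ?thesis using F_eq pm1 by simp
  qed
  have tvpos: "0 \<le> tv_dist (pauli_strings n) (p_mix n \<rho> \<sigma>) (pmf pt)"
    unfolding tv_dist_def by (intro divide_nonneg_pos sum_nonneg) auto
  have Dpos: "\<Delta> > 0" using tvpos assms(8) by linarith
  show ?thesis
  proof (cases "1 \<le> \<delta>")
    case True
    then show ?thesis by (simp add: measure_nonneg order_trans[of _ 0])
  next
    case False
    then have d1: "\<delta> < 1" by simp
    show ?thesis
    proof (cases "\<epsilon> \<le> 1/5")
      case False
      have "measure_pmf.prob (symmetric_estimator n \<rho> \<sigma> g0 pt N1 N2) {y. \<bar>y - F\<bar> \<le> 5 * \<epsilon> + 2 * \<Delta>} = 1"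
      proof (subst measure_pmf.prob_eq_1, simp, subst AE_measure_pmf_iff, intro ballI)
        fix y assume "y \<in> set_pmf (symmetric_estimator n \<rho> \<sigma> g0 pt N1 N2)"
        then obtain gs where gs: "gs \<in> set_pmf (iid_pmf N1 D)" and y: "y = sum_list gs / real N1"
          unfolding est by auto
        have "length gs = N1" "set gs \<subseteq> {0..1}" using set_iid[OF gs] D01 by auto
        then have "0 \<le> sum_list gs" "sum_list gs \<le> real N1" using sum_list_01 by auto
        then have "0 \<le> y \<and> y \<le> 1" unfolding y
          by (cases "N1 = 0") (auto simp: divide_le_eq)
        then have "\<bar>y - F\<bar> \<le> 1" using F01 by linarith
        then show "y \<in> {y. \<bar>y - F\<bar> \<le> 5 * \<epsilon> + 2 * \<Delta>}" using False Dpos by simp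
      qed
      then show ?thesis using d0 by simp
    next
      case True
      note e5 = True
      have eps2: "\<epsilon>\<^sup>2 \<le> \<epsilon> / 5" using e0 True by (simp add: power2_eq_square mult_right_mono)
      have L8: "log 2 (8 / \<delta>) \<ge> 3"
      proof -
        have "8 \<le> 8 / \<delta>" using d0 d1 by (simp add: le_divide_eq)
        then have "log 2 8 \<le> log 2 (8 / \<delta>)" using d0 by (intro log_mono) auto
        then show ?thesis using log2_8 by simp
      qed
      have N1e: "2 * real N1 * \<epsilon>\<^sup>2 \<ge> log 2 (8 / \<delta>)"
      proof -
        have "1 / (2 * \<epsilon>\<^sup>2) * log 2 (8 / \<delta>) * (2 * \<epsilon>\<^sup>2) \<le> real N1 * (2 * \<epsilon>\<^sup>2)"
          using assms(11) e0 by (intro mult_right_mono) auto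
        then show ?thesis using e0 by (simp add: field_simps)
      qed
      then have N1e3: "2 * real N1 * \<epsilon>\<^sup>2 \<ge> 3" using L8 by linarith
      then have N1pos: "N1 > 0" using e0 by (cases "N1 = 0") auto
      define T where "T = 2 powr (- M1 / \<epsilon>)"
      define B1 where "B1 = {x\<in>PS. (alpha n \<rho> x)\<^sup>2 < T}"
      define B2 where "B2 = {x\<in>PS. (alpha n \<sigma> x)\<^sup>2 < T}"
      define B where "B = {x\<in>PS. (alpha n \<rho> x)\<^sup>2 < T \<and> (alpha n \<sigma> x)\<^sup>2 < T}"
      have M1r: "stabilizer_renyi1 n \<rho> \<le> M1" and M1s: "stabilizer_renyi1 n \<sigma> \<le> M1" using assms(9) by auto
      have M1pos: "M1 \<ge> 0" using bad_mass(2)[OF pure1 M1r e0] .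
      have T0: "T > 0" by (simp add: T_def)
      have T1: "T \<le> 1"
      proof -
        have "T \<le> 2 powr 0" unfolding T_def using M1pos e0 by (intro powr_mono) auto
        then show ?thesis by simp
      qed
      have badB1: "(\<Sum>x\<in>B1. p_state n \<rho> x) \<le> \<epsilon>"
        using bad_mass(1)[OF pure1 M1r e0] by (simp add: B1_def T_def PS_def)
      have badB2: "(\<Sum>x\<in>B2. p_state n \<sigma> x) \<le> \<epsilon>"
        using bad_mass(1)[OF pure2 M1s e0] by (simp add: B2_def T_def PS_def)
      have BPS: "B \<subseteq> PS" by (auto simp: B_def)
      have badB: "(\<Sum>x\<in>B. pm x) \<le> \<epsilon>"
      proof -
        have "(\<Sum>x\<in>B. p_state n \<rho> x) \<le> (\<Sum>x\<in>B1. p_state n \<rho> x)"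
          by (intro sum_mono2) (auto simp: B_def B1_def finPS p_state_nonneg)
        moreover have "(\<Sum>x\<in>B. p_state n \<sigma> x) \<le> (\<Sum>x\<in>B2. p_state n \<sigma> x)"
          by (intro sum_mono2) (auto simp: B_def B2_def finPS p_state_nonneg)
        moreover have "(\<Sum>x\<in>B. pm x) = ((\<Sum>x\<in>B. p_state n \<rho> x) + (\<Sum>x\<in>B. p_state n \<sigma> x)) / 2"
          by (simp add: pm_def p_mix_def sum_divide_distrib[symmetric] sum.distrib)
        ultimately show ?thesis using badB1 badB2 by argo
      qed
      define t where "t = min (\<epsilon>\<^sup>2) (\<epsilon> * T)"
      have t0: "t > 0" using e0 T0 by (simp add: t_def)
      have tT: "t \<le> \<epsilon> * T" by (simp add: t_def)
      have t2: "t\<^sup>2 = min (\<epsilon> ^ 4) (\<epsilon>\<^sup>2 * 2 powr (- 2 * M1 / \<epsilon>))"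
      proof -
        have "t\<^sup>2 = min ((\<epsilon>\<^sup>2)\<^sup>2) ((\<epsilon> * T)\<^sup>2)" unfolding t_def
          using e0 T0 by (intro min_sq) auto
        also have "(\<epsilon> * T)\<^sup>2 = \<epsilon>\<^sup>2 * 2 powr (2 * (- M1 / \<epsilon>))"
          by (simp add: power_mult_distrib T_def powr_sq)
        also have "2 * (- M1 / \<epsilon>) = - 2 * M1 / \<epsilon>" by simp
        finally show ?thesis by simp
      qed
      define L where "L = log 2 (8 * real N1 / \<delta>)"
      have z1: "8 * real N1 / \<delta> > 1"
      proof -
        have "1 < 8 * real N1" using N1pos by simp
        also have "8 * real N1 \<le> 8 * real N1 / \<delta>" using d0 d1 by (simp add: le_divide_eq mult_left_le)
        finally show ?thesis .
      qed
      have Lpos: "L > 0" using z1 by (simp add: L_def)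
      have N2L: "real N2 * t\<^sup>2 / 2 \<ge> L"
      proof -
        have "2 / t\<^sup>2 * L \<le> real N2" using assms(12) unfolding t2[symmetric] L_def .
        then have "2 / t\<^sup>2 * L * (t\<^sup>2 / 2) \<le> real N2 * (t\<^sup>2 / 2)"
          by (intro mult_right_mono) auto
        then show ?thesis using t0 by (simp add: field_simps)
      qed
      have N2pos: "N2 > 0"
      proof (rule ccontr)
        assume "\<not> N2 > 0" then have "N2 = 0" by simp
        then show False using N2L Lpos by simp
      qed
      define q where "q = 4 * exp (- real N2 * t\<^sup>2 / 2)"
      have q_le: "q \<le> \<epsilon> / 10"
      proof -
        have "exp (- (real N2 * t\<^sup>2 / 2)) \<le> 1 / (8 * real N1 / \<delta>)"
          by (rule exp_bound[OF z1]) (use N2L in \<open>simp add: L_def\<close>)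
        then have "q \<le> 4 * (1 / (8 * real N1 / \<delta>))" unfolding q_def by simp
        also have "\<dots> = \<delta> / (2 * real N1)" using N1pos d0 by (simp add: field_simps)
        also have "\<dots> \<le> 1 / (2 * real N1)" using d1 N1pos by (intro divide_right_mono) auto
        also have "\<dots> \<le> \<epsilon>\<^sup>2 / 3"
          using N1e3 N1pos e0 by (simp add: field_simps)
        also have "\<dots> \<le> \<epsilon> / 10" using eps2 e0 by linarith
        finally show ?thesis .
      qed
      have good: "\<bar>\<psi> x - \<phi> x\<bar> \<le> 29/10 * \<epsilon> + q" if x: "x \<in> PS - B" for x
      proof -
        let ?u = "alpha n \<rho> x" and ?v = "alpha n \<sigma> x"
        have a0: "0 \<le> ?u\<^sup>2" "0 \<le> ?v\<^sup>2" by simp_all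
        have "\<not> (?u\<^sup>2 < T \<and> ?v\<^sup>2 < T)" using x by (auto simp: B_def)
        then have rT: "?u\<^sup>2 + ?v\<^sup>2 \<ge> T" using a0 by linarith
        have r0: "?u\<^sup>2 + ?v\<^sup>2 > 0" using rT T0 by linarith
        have te: "t\<^sup>2 \<le> \<epsilon>\<^sup>2 * (?u\<^sup>2 + ?v\<^sup>2)"
        proof -
          have "t\<^sup>2 \<le> (\<epsilon> * T)\<^sup>2" using t0 tT by (intro power_mono) auto
          also have "\<dots> = \<epsilon>\<^sup>2 * (T * T)" by (simp add: power2_eq_square)
          also have "\<dots> \<le> \<epsilon>\<^sup>2 * T" using T0 T1 by (intro mult_left_mono) (auto simp: mult_le_cancel_left1)
          also have "\<dots> \<le> \<epsilon>\<^sup>2 * (?u\<^sup>2 + ?v\<^sup>2)" using rT by (intro mult_left_mono) auto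
          finally show ?thesis .
        qed
        have "\<bar>measure_pmf.expectation (protocol_round n \<rho> \<sigma> g0 N2 x) (\<lambda>y. y)
            - G g0 ?u ?v\<bar> \<le> 29/10 * \<epsilon> + 4 * exp (- real N2 * t\<^sup>2 / 2)"
        proof (rule round_close[OF alpha_bound[OF pure1] alpha_bound[OF pure2] N2pos _ g])
          show "0 \<le> t" using t0 by simp
          show "0 \<le> 29/10 * \<epsilon>" using e0 by simp
          fix u' v' assume "\<bar>u' - ?u\<bar> < t" "\<bar>v' - ?v\<bar> < t"
          then show "\<bar>G g0 u' v' - G g0 ?u ?v\<bar> \<le> 29/10 * \<epsilon>"
            using G_close[OF r0 _ _ te e0 True] by blast
        qed
        then show ?thesis by (simp add: \<psi>_def \<phi>_def R_def q_def)
      qed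
      have ED: "measure_pmf.expectation D (\<lambda>y. y) = (\<Sum>x\<in>PS. pmf pt x * \<psi> x)"
        unfolding D_def \<psi>_def
        by (subst pmf_expectation_bind[of PS]) (auto simp: finPS R_def round_finite assms(7)[folded PS_def])
      have tvs: "(\<Sum>x\<in>PS. \<bar>pm x - pmf pt x\<bar>) < 2 * \<Delta>"
        using assms(8) by (simp add: tv_dist_def PS_def pm_def)
      have close_ED: "\<bar>measure_pmf.expectation D (\<lambda>y. y) - F\<bar> \<le> (\<Sum>x\<in>PS. \<bar>pm x - pmf pt x\<bar>) + \<epsilon> + (29/10 * \<epsilon> + q)"
        unfolding ED F_eq
      proof (rule assembly[OF finPS BPS])
        show "\<And>x. x \<in> PS \<Longrightarrow> 0 \<le> pm x" using pm0 by simp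
        show "(\<Sum>x\<in>PS. pm x) = 1" by (rule pm1)
        show "\<And>x. x \<in> PS \<Longrightarrow> \<bar>\<psi> x\<bar> \<le> 1" using \<psi>01 by (force simp: abs_le_iff)
        show "\<bar>\<psi> x - \<phi> x\<bar> \<le> 1" if "x \<in> PS" for x
        proof -
          have "0 \<le> \<psi> x" "\<psi> x \<le> 1" "0 \<le> \<phi> x" "\<phi> x \<le> 1" using \<psi>01[of x] \<phi>01[of x] by auto
          then show ?thesis by (simp add: abs_le_iff)
        qed
        show "(\<Sum>x\<in>B. pm x) \<le> \<epsilon>" by (rule badB)
        show "\<And>x. x \<in> PS - B \<Longrightarrow> \<bar>\<psi> x - \<phi> x\<bar> \<le> 29/10 * \<epsilon> + q" by (rule good)
        show "0 \<le> 29/10 * \<epsilon> + q" using e0 by (simp add: q_def)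
      qed simp
      have close_ED': "\<bar>measure_pmf.expectation D (\<lambda>y. y) - F\<bar> < 2 * \<Delta> + 4 * \<epsilon>"
        using close_ED tvs q_le by linarith
      define E where "E = measure_pmf.expectation D (\<lambda>y. y)"
      have hoe: "measure_pmf.prob (iid_pmf N1 D) {xs. \<bar>sum_list xs / real N1 - E\<bar> \<ge> \<epsilon>} \<le> \<delta> / 4"
      proof -
        have "measure_pmf.prob (iid_pmf N1 D) {xs. \<bar>sum_list xs / real N1 - E\<bar> \<ge> \<epsilon>}
            \<le> 2 * exp (- 2 * real N1 * \<epsilon>\<^sup>2 / (1 - 0)\<^sup>2)"
          unfolding E_def by (rule hoeffding_iid[OF D01]) (use N1pos e0 in auto)
        also have "exp (- 2 * real N1 * \<epsilon>\<^sup>2 / (1 - 0)\<^sup>2) = exp (- (2 * real N1 * \<epsilon>\<^sup>2))" by simp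
        also have "\<dots> \<le> 1 / (8 / \<delta>)"
          by (rule exp_bound) (use d0 d1 N1e in \<open>auto simp: less_divide_eq\<close>)
        also have "2 * (1 / (8 / \<delta>)) = \<delta> / 4" by simp
        finally show ?thesis by simp
      qed
      have "measure_pmf.prob (symmetric_estimator n \<rho> \<sigma> g0 pt N1 N2) {y. \<bar>y - F\<bar> \<le> 5 * \<epsilon> + 2 * \<Delta>}
          = measure_pmf.prob (iid_pmf N1 D) {gs. \<bar>sum_list gs / real N1 - F\<bar> \<le> 5 * \<epsilon> + 2 * \<Delta>}"
        unfolding est by simp
      also have "\<dots> \<ge> measure_pmf.prob (iid_pmf N1 D) (UNIV - {xs. \<bar>sum_list xs / real N1 - E\<bar> \<ge> \<epsilon>})"
        using close_ED' unfolding E_def[symmetric]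
        by (intro measure_pmf.finite_measure_mono) auto
      also have "measure_pmf.prob (iid_pmf N1 D) (UNIV - {xs. \<bar>sum_list xs / real N1 - E\<bar> \<ge> \<epsilon>})
           = 1 - measure_pmf.prob (iid_pmf N1 D) {xs. \<bar>sum_list xs / real N1 - E\<bar> \<ge> \<epsilon>}"
        using measure_pmf.prob_compl[of "{xs. \<bar>sum_list xs / real N1 - E\<bar> \<ge> \<epsilon>}" "iid_pmf N1 D"] by simp
      finally show ?thesis using hoe d0 by linarith
    qed
  qed
qed

end
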